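(* For every integer $m\ge1$ and every $x\in I$, $$\sum_{i=0}^m\Big|x-\frac{i}{m}\Big|\,\big|b_{i-1,m-1}(x)-b_{i,m-1}(x)\big|=\frac1m.$$
   Context: $I=[0,1]$. $b_{i,m}(t)=\binom{m}{i}t^i(1-t)^{m-i}$ for $i\in\{0,\ldots,m\}$, with the convention $b_{-1,m-1}=b_{m,m-1}=0$. *)

theory Defs
  imports Complex_Main
begin

definition bern :: "int \<Rightarrow> nat \<Rightarrow> real \<Rightarrow> real" where
  "bern i m t = (if 0 \<le> i \<and> i \<le> int m
     then real (m choose nat i) * t ^ nat i * (1 - t) ^ (m - nat i) else 0)"

end

theory Submission
  imports Defs "HOL-Analysis.Weierstrass_Theorems"
begin

lemma Dkey:
  fixes n i :: nat and x :: real
  assumes "i \<le> Suc n"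
  shows "(bern (int i - 1) n x - bern (int i) n x) * (x * (1 - x))
         = (real i / real (Suc n) - x) * Bernstein (Suc n) i x"
proof -
  consider "i = 0" | "i = Suc n" | j where "i = Suc j" "j < n"
    using assms by (metis Suc_le_lessD less_Suc_eq not0_implies_Suc)
  then show ?thesis
  proof cases
    case 1
    then show ?thesis by (simp add: bern_def Bernstein_def field_simps)
  next
    case 2
    then show ?thesis by (simp add: bern_def Bernstein_def field_simps)
  next
    case 3
    have c1: "real (n choose j) * real (Suc n) = real (Suc n choose Suc j) * real (Suc j)"
      by (metis Suc_times_binomial_eq of_nat_mult mult.commute)
    have c2: "real (n choose Suc j) * real (Suc n) = real (Suc n choose Suc j) * real (n - j)"
    proof -
      have "(Suc n - Suc j) * (Suc n choose Suc j) = Suc n * (n choose Suc j)"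
        using binomial_absorb_comp[of "Suc n" "Suc j"] by simp
      then show ?thesis by (metis diff_Suc_Suc of_nat_mult mult.commute)
    qed
    have nj: "n - j = Suc (n - Suc j)" using 3 by simp
    have e1: "bern (int i - 1) n x = real (n choose j) * x ^ j * (1-x) ^ Suc (n - Suc j)"
      using 3 by (simp add: bern_def nj)
    have e2: "bern (int i) n x = real (n choose Suc j) * x ^ Suc j * (1-x) ^ (n - Suc j)"
    proof -
      have "nat (1 + int j) = Suc j" by simp
      then show ?thesis using 3 by (simp add: bern_def)
    qed
    have e3: "Bernstein (Suc n) i x = real (Suc n choose Suc j) * x ^ Suc j * (1-x) ^ Suc (n - Suc j)"
      using 3 by (simp add: Bernstein_def nj)
    define C where "C = real (Suc n choose Suc j)"
    define P where "P = x ^ j * (1-x) ^ (n - Suc j)"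
    have A: "real (n choose j) = C * real (Suc j) / real (Suc n)"
      using c1 unfolding C_def by (simp add: field_simps)
    have B: "real (n choose Suc j) = C * (real n - real j) / real (Suc n)"
      using c2 3 unfolding C_def by (simp add: field_simps of_nat_diff)
    have alg: "\<And>C y Q::real. N > 0 \<Longrightarrow>
       (C * a / N * y * ((1-x) * Q) - C * b / N * (x * y) * Q) * (x * (1 - x))
        = (a / N - x) * (C * (x * y) * ((1-x) * Q))" if "b = N - a" for a b N :: real
      unfolding that by (simp add: field_simps)
    show ?thesis unfolding e1 e2 e3 A B power_Suc unfolding 3(1) C_def[symmetric]
      by (rule alg[of "real n - real j" "real (Suc n)" "real (Suc j)"]) auto
  qed
qed

lemma sum_bern2: "(\<Sum>k\<le>n. (x - k/n)\<^sup>2 * Bernstein n k x) = x * (1 - x) / n" if "n > 0" for n :: nat and x :: real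
proof -
  have *: "\<And>a b x::real. (a - b)\<^sup>2 * x = a * (a - 1) * x + (1 - 2 * b) * a * x + b * b * x"
    by (simp add: algebra_simps power2_eq_square)
  have "(\<Sum>k\<le>n. (k - n * x)\<^sup>2 * Bernstein n k x) = n * x * (1 - x)"
    apply (simp add: * sum.distrib)
    apply (simp flip: sum_distrib_left add: mult.assoc)
    apply (simp add: algebra_simps power2_eq_square)
    done
  then have "(\<Sum>k\<le>n. (k - n * x)\<^sup>2 * Bernstein n k x)/n^2 = x * (1 - x) / n"
    using that by (simp add: power2_eq_square)
  moreover have "(\<Sum>k\<le>n. (k - n * x)\<^sup>2 * Bernstein n k x)/n^2 = (\<Sum>k\<le>n. (x - k/n)\<^sup>2 * Bernstein n k x)"
    unfolding sum_divide_distrib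
    by (rule sum.cong) (use that in \<open>auto simp: field_simps power2_eq_square\<close>)
  ultimately show ?thesis by simp
qed

theorem mainTheorem6:
  fixes m :: nat and x :: real
  assumes "m \<ge> 1" and "x \<in> {0..1}"
  shows "(\<Sum>i=0..m. \<bar>x - real i / real m\<bar> *
            \<bar>bern (int i - 1) (m - 1) x - bern (int i) (m - 1) x\<bar>) = 1 / real m"
proof -
  obtain n where mn: "m = Suc n" using assms(1) by (cases m) auto
  have x01: "0 \<le> x" "x \<le> 1" using assms(2) by auto
  have ni[simp]: "\<And>i::nat. nat (int i - 1) = i - 1" by simp
  consider "x = 0" | "x = 1" | "0 < x" "x < 1" using x01 by linarith
  then show ?thesis
  proof cases
    case 1
    have "\<And>i. i \<in> {0..m} \<Longrightarrow> \<bar>x - real i / real m\<bar> *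
            \<bar>bern (int i - 1) (m - 1) x - bern (int i) (m - 1) x\<bar> = (if i = 1 then 1 / real m else 0)"
      using 1 mn by (auto simp: bern_def power_0_left)
    then have "(\<Sum>i=0..m. \<bar>x - real i / real m\<bar> *
            \<bar>bern (int i - 1) (m - 1) x - bern (int i) (m - 1) x\<bar>) = (\<Sum>i=0..m. (if i = 1 then 1 / real m else 0))"
      by (rule sum.cong[OF refl])
    also have "\<dots> = 1 / real m" using mn by (simp add: sum.delta)
    finally show ?thesis .
  next
    case 2
    have "\<And>i. i \<in> {0..m} \<Longrightarrow> \<bar>x - real i / real m\<bar> *
            \<bar>bern (int i - 1) (m - 1) x - bern (int i) (m - 1) x\<bar> = (if i = n then 1 / real m else 0)"
    proof -
      fix i assume "i \<in> {0..m}"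
      then consider "i < n" | "i = n" | "i = Suc n" using mn by force
      then show "\<bar>x - real i / real m\<bar> *
            \<bar>bern (int i - 1) (m - 1) x - bern (int i) (m - 1) x\<bar> = (if i = n then 1 / real m else 0)"
      proof cases
        case 1
        then show ?thesis using 2 mn by (simp add: bern_def power_0_left)
      next
        case 2
        then show ?thesis using \<open>x = 1\<close> mn by (auto simp: bern_def field_simps)
      next
        case 3
        then show ?thesis using 2 mn by simp
      qed
    qed
    then have "(\<Sum>i=0..m. \<bar>x - real i / real m\<bar> *
            \<bar>bern (int i - 1) (m - 1) x - bern (int i) (m - 1) x\<bar>) = (\<Sum>i=0..m. (if i = n then 1 / real m else 0))"
      by (rule sum.cong[OF refl])
    also have "\<dots> = 1 / real m" using mn by (simp add: sum.delta)
    finally show ?thesis .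
  next
    case 3
    have pos: "x * (1 - x) > 0" using 3 by simp
    have "\<And>i. i \<in> {0..m} \<Longrightarrow> \<bar>x - real i / real m\<bar> *
            \<bar>bern (int i - 1) (m - 1) x - bern (int i) (m - 1) x\<bar> * (x * (1 - x))
           = (x - real i / real m)\<^sup>2 * Bernstein m i x"
    proof -
      fix i assume i: "i \<in> {0..m}"
      have B: "Bernstein m i x \<ge> 0" using x01 by (simp add: Bernstein_def)
      have "\<bar>x - real i / real m\<bar> *
            \<bar>bern (int i - 1) (m - 1) x - bern (int i) (m - 1) x\<bar> * (x * (1 - x))
          = \<bar>x - real i / real m\<bar> *
            \<bar>(bern (int i - 1) (m - 1) x - bern (int i) (m - 1) x) * (x * (1 - x))\<bar>"
        using pos 3 by (simp add: abs_mult)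
      also have "\<dots> = \<bar>x - real i / real m\<bar> * \<bar>(real i / real m - x) * Bernstein m i x\<bar>"
        using Dkey[of i n x] i mn by simp
      also have "\<dots> = (x - real i / real m)\<^sup>2 * Bernstein m i x"
        using B by (simp add: abs_mult power2_eq_square abs_minus_commute)
      finally show "\<bar>x - real i / real m\<bar> *
            \<bar>bern (int i - 1) (m - 1) x - bern (int i) (m - 1) x\<bar> * (x * (1 - x))
           = (x - real i / real m)\<^sup>2 * Bernstein m i x" .
    qed
    then have "(\<Sum>i=0..m. \<bar>x - real i / real m\<bar> *
            \<bar>bern (int i - 1) (m - 1) x - bern (int i) (m - 1) x\<bar>) * (x * (1 - x))
         = (\<Sum>i=0..m. (x - real i / real m)\<^sup>2 * Bernstein m i x)"
      unfolding sum_distrib_right by (rule sum.cong[OF refl])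
    also have "\<dots> = x * (1 - x) / m"
      using sum_bern2[of m x] mn by (simp add: atMost_atLeast0)
    also have "\<dots> = (1 / real m) * (x * (1 - x))" by simp
    finally show ?thesis using pos by (subst (asm) mult_cancel_right) auto
  qed
qed

end
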